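(* Consider the episodic MDP and algorithm KBVI-BUCB described in the context, and let $\mathcal{E}$ be the event that for all $(s,a,h,k)\in\mathcal{S}\times\mathcal{A}\times[H]\times[K]$, \[ \big|(\widehat P_h^k-P_h)V_{h+1}^*(s,a)\big|\le8\sqrt{\frac{\widehat{\mathbb{V}}_h^k(V_{h+1}^*,s,a)\eta_1}{C_h^k(s,a)}}+\frac{H\eta_4}{C_h^k(s,a)}+\sigma D_\delta . \] Then on $\mathcal{E}$, $V_h^k(s)\ge V_h^*(s)$ for all $s\in\mathcal{S}$ and all $(h,k)\in[H+1]\times[K]$.
   Context: Setting. $(\mathcal{S},\rho_{\mathcal{S}})$, $(\mathcal{A},\rho_{\mathcal{A}})$ compact metric spaces; $\rho[(s,a),(s',a')]=\rho_{\mathcal{S}}(s,s')+\rho_{\mathcal{A}}(a,a')$; $[n]=\{1,\dots,n\}$. Episodic MDP with horizon $H$: transition kernels $P_h(\cdot\mid s,a)$ on the Borel sets of $\mathcal{S}$, known deterministic rewards $r_h\ge0$ with $\sum_{h=1}^Hr_h(s_h,a_h)\le H$ a.s. under every policy; $P_hf(s,a)=\int f\,dP_h(\cdot\mid s,a)$. Lipschitz assumption: $\lambda_r>0$, $\lambda_p\in(0,1)$ with $|r_h(s,a)-r_h(s',a')|\le\lambda_r\rho[(s,a),(s',a')]$ and $W_1(P_h(\cdot\mid s,a),P_h(\cdot\mid s',a'))\le\lambda_p\rho[(s,a),(s',a')]$. $V_h^*(s)=\sup_\pi\mathbb{E}[\sum_{t=h}^Hr_t\mid s_h=s,\pi]$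 over deterministic policies, $V^*_{H+1}\equiv0$. $L_h=\sum_{h'=h}^H\lambda_r\lambda_p^{H-h'}$. Kernel $g:[0,\infty)\to[0,1]$ differentiable, non-increasing, $g(4)>0$, $g(z)\le C_1e^{-z^2/2}$, $\sup|g'|\le C_2$. Algorithm KBVI-BUCB (bandwidth $\sigma>0$, $\beta\in(0,1]$, $\delta\in(0,1)$): in episode $k\in[K]$, initial state $s_1^k$ given; for $h=1..H$ play $a_h^k\in\arg\max_aQ_h^k(s_h^k,a)$, observe $s_{h+1}^k\sim P_h(\cdot\mid s_h^k,a_h^k)$. Using episodes $l<k$: $w_h^l(s,a)=g(\rho[(s,a),(s_h^l,a_h^l)]/\sigma)$, $C_h^k(s,a)=\beta+\sum_{l=1}^{k-1}w_h^l(s,a)$, $\widetilde w_h^{k,l}=w_h^l/C_h^k$, $\widehat P_h^kf(s,a)=\sum_{l<k}\widetilde w_h^{k,l}(s,a)f(s_{h+1}^l)$, $\widehat{\mathbb{V}}_h^k(f,s,a)=\sum_{l<k}\widetilde w_h^{k,l}(s,a)[f(s_{h+1}^l)-\widehat P_h^kf(s,a)]^2$. Constants: $\eta=\log(2/\delta)$, $\eta_1=C_1\eta$, $\eta_2=7\max\{C_1,1\}\eta+\beta$, $\eta_4=16\eta_1+2\eta_2$, $\gamma=4\sqrt{\log(HK/\beta+e)}$, $\eta_3=8\lambda_pL_1\eta\gamma$, $D_\delta=16\sqrt{C_2\eta_1\eta/\beta^3}+(C_2\eta_4+2C_2)\frac{\sigma}{H\beta^2}+\lambda_pL_1\frac{\sigma^2}{KH^2}+\eta_3$.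 Bonus $b_h^k=9\sqrt{\widehat{\mathbb{V}}_h^k(V_{h+1}^k,\cdot)\eta_4/C_h^k}+162H\eta_4/C_h^k+\sigma D_\delta$; $V_{H+1}^k\equiv0$, $\widetilde Q_h^k=r_h+\widehat P_h^kV_{h+1}^k+b_h^k$, $Q_h^1\equiv H$, $Q_h^k(s,a)=\min_{l\in[k-1]}\{\widetilde Q_h^k(s_h^l,a_h^l)+L_h\rho[(s,a),(s_h^l,a_h^l)]\}$ for $k\ge2$, $V_h^k(s)=\min\{\max_aQ_h^k(s,a),H\}$. *)

theory Defs
  imports "HOL-Probability.Probability"
begin

record ('s, 'a) kbvi_prm =
  Hh  :: nat
  Kk  :: nat
  gk  :: "real \<Rightarrow> real"
  sig :: real
  bet :: real
  del :: real
  cC1 :: real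
  cC2 :: real
  lr  :: real
  lp  :: real
  rw  :: "nat \<Rightarrow> 's \<Rightarrow> 'a \<Rightarrow> real"

definition rho :: "'s::metric_space \<times> 'a::metric_space \<Rightarrow> 's \<times> 'a \<Rightarrow> real" where
  "rho x y = dist (fst x) (fst y) + dist (snd x) (snd y)"

definition couplings :: "'s::metric_space measure \<Rightarrow> 's measure \<Rightarrow> ('s \<times> 's) measure set" where
  "couplings \<mu> \<nu> = {\<gamma>. sets \<gamma> = sets (borel :: ('s \<times> 's) measure) \<and> prob_space \<gamma> \<and>
      distr \<gamma> borel fst = \<mu> \<and> distr \<gamma> borel snd = \<nu>}"

definition W1 :: "'s::metric_space measure \<Rightarrow> 's measure \<Rightarrow> ennreal" where
  "W1 \<mu> \<nu> = (INF \<gamma>\<in>couplings \<mu> \<nu>. \<integral>\<^sup>+ z. ennreal (dist (fst z) (snd z)) \<partial>\<gamma>)"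

definition eta :: "('s,'a) kbvi_prm \<Rightarrow> real" where "eta p = ln (2 / del p)"
definition eta1 :: "('s,'a) kbvi_prm \<Rightarrow> real" where "eta1 p = cC1 p * eta p"
definition eta2 :: "('s,'a) kbvi_prm \<Rightarrow> real" where
  "eta2 p = 7 * max (cC1 p) 1 * eta p + bet p"
definition eta4 :: "('s,'a) kbvi_prm \<Rightarrow> real" where "eta4 p = 16 * eta1 p + 2 * eta2 p"
definition gam :: "('s,'a) kbvi_prm \<Rightarrow> real" where
  "gam p = 4 * sqrt (ln (real (Hh p) * real (Kk p) / bet p + exp 1))"
definition Lc :: "('s,'a) kbvi_prm \<Rightarrow> nat \<Rightarrow> real" where
  "Lc p h = (\<Sum>h'\<in>{h..Hh p}. lr p * lp p ^ (Hh p - h'))"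
definition eta3 :: "('s,'a) kbvi_prm \<Rightarrow> real" where
  "eta3 p = 8 * lp p * Lc p 1 * eta p * gam p"
definition Ddel :: "('s,'a) kbvi_prm \<Rightarrow> real" where
  "Ddel p = 16 * sqrt (cC2 p * eta1 p * eta p / bet p ^ 3)
          + (cC2 p * eta4 p + 2 * cC2 p) * sig p / (real (Hh p) * bet p ^ 2)
          + lp p * Lc p 1 * sig p ^ 2 / (real (Kk p) * real (Hh p) ^ 2)
          + eta3 p"

text \<open>Data: Ss l h = s_h^l, As l h = a_h^l (episode l, step h).\<close>
definition wgt :: "('s::metric_space,'a::metric_space) kbvi_prm \<Rightarrow> (nat \<Rightarrow> nat \<Rightarrow> 's) \<Rightarrow> (nat \<Rightarrow> nat \<Rightarrow> 'a)
    \<Rightarrow> nat \<Rightarrow> nat \<Rightarrow> 's \<times> 'a \<Rightarrow> real" where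
  "wgt p Ss As h l x = gk p (rho x (Ss l h, As l h) / sig p)"

definition Ccnt :: "('s::metric_space,'a::metric_space) kbvi_prm \<Rightarrow> (nat \<Rightarrow> nat \<Rightarrow> 's) \<Rightarrow> (nat \<Rightarrow> nat \<Rightarrow> 'a)
    \<Rightarrow> nat \<Rightarrow> nat \<Rightarrow> 's \<times> 'a \<Rightarrow> real" where
  "Ccnt p Ss As k h x = bet p + (\<Sum>l\<in>{1..<k}. wgt p Ss As h l x)"

definition Phat :: "('s::metric_space,'a::metric_space) kbvi_prm \<Rightarrow> (nat \<Rightarrow> nat \<Rightarrow> 's) \<Rightarrow> (nat \<Rightarrow> nat \<Rightarrow> 'a)
    \<Rightarrow> nat \<Rightarrow> nat \<Rightarrow> ('s \<Rightarrow> real) \<Rightarrow> 's \<times> 'a \<Rightarrow> real" where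
  "Phat p Ss As k h f x =
     (\<Sum>l\<in>{1..<k}. wgt p Ss As h l x / Ccnt p Ss As k h x * f (Ss l (Suc h)))"

definition Vhat :: "('s::metric_space,'a::metric_space) kbvi_prm \<Rightarrow> (nat \<Rightarrow> nat \<Rightarrow> 's) \<Rightarrow> (nat \<Rightarrow> nat \<Rightarrow> 'a)
    \<Rightarrow> nat \<Rightarrow> nat \<Rightarrow> ('s \<Rightarrow> real) \<Rightarrow> 's \<times> 'a \<Rightarrow> real" where
  "Vhat p Ss As k h f x =
     (\<Sum>l\<in>{1..<k}. wgt p Ss As h l x / Ccnt p Ss As k h x
        * (f (Ss l (Suc h)) - Phat p Ss As k h f x)\<^sup>2)"

definition bonus :: "('s::metric_space,'a::metric_space) kbvi_prm \<Rightarrow> (nat \<Rightarrow> nat \<Rightarrow> 's) \<Rightarrow> (nat \<Rightarrow> nat \<Rightarrow> 'a)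
    \<Rightarrow> nat \<Rightarrow> nat \<Rightarrow> ('s \<Rightarrow> real) \<Rightarrow> 's \<times> 'a \<Rightarrow> real" where
  "bonus p Ss As k h W x =
      9 * sqrt (Vhat p Ss As k h W x * eta4 p / Ccnt p Ss As k h x)
    + 162 * real (Hh p) * eta4 p / Ccnt p Ss As k h x
    + sig p * Ddel p"

text \<open>Q-tilde_h^k, where W plays the role of V_{h+1}^k.\<close>
definition Qtil :: "('s::metric_space,'a::metric_space) kbvi_prm \<Rightarrow> (nat \<Rightarrow> nat \<Rightarrow> 's) \<Rightarrow> (nat \<Rightarrow> nat \<Rightarrow> 'a)
    \<Rightarrow> nat \<Rightarrow> nat \<Rightarrow> ('s \<Rightarrow> real) \<Rightarrow> 's \<times> 'a \<Rightarrow> real" where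
  "Qtil p Ss As k h W x = rw p h (fst x) (snd x) + Phat p Ss As k h W x + bonus p Ss As k h W x"

definition Qk :: "('s::metric_space,'a::metric_space) kbvi_prm \<Rightarrow> (nat \<Rightarrow> nat \<Rightarrow> 's) \<Rightarrow> (nat \<Rightarrow> nat \<Rightarrow> 'a)
    \<Rightarrow> nat \<Rightarrow> nat \<Rightarrow> ('s \<Rightarrow> real) \<Rightarrow> 's \<times> 'a \<Rightarrow> real" where
  "Qk p Ss As k h W x =
     (if k \<le> 1 then real (Hh p)
      else Min ((\<lambda>l. Qtil p Ss As k h W (Ss l h, As l h) + Lc p h * rho x (Ss l h, As l h)) ` {1..<k}))"

definition Vstep :: "('s::metric_space,'a::metric_space) kbvi_prm \<Rightarrow> (nat \<Rightarrow> nat \<Rightarrow> 's) \<Rightarrow> (nat \<Rightarrow> nat \<Rightarrow> 'a)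
    \<Rightarrow> nat \<Rightarrow> nat \<Rightarrow> ('s \<Rightarrow> real) \<Rightarrow> 's \<Rightarrow> real" where
  "Vstep p Ss As k h W s = min (SUP a. Qk p Ss As k h W (s, a)) (real (Hh p))"

text \<open>Backward recursion: Vrem d = V_{H+1-d}^k.\<close>
primrec Vrem :: "('s::metric_space,'a::metric_space) kbvi_prm \<Rightarrow> (nat \<Rightarrow> nat \<Rightarrow> 's) \<Rightarrow> (nat \<Rightarrow> nat \<Rightarrow> 'a)
    \<Rightarrow> nat \<Rightarrow> nat \<Rightarrow> 's \<Rightarrow> real" where
  "Vrem p Ss As k 0 = (\<lambda>_. 0)"
| "Vrem p Ss As k (Suc d) = Vstep p Ss As k (Hh p - d) (Vrem p Ss As k d)"

definition Vk :: "('s::metric_space,'a::metric_space) kbvi_prm \<Rightarrow> (nat \<Rightarrow> nat \<Rightarrow> 's) \<Rightarrow> (nat \<Rightarrow> nat \<Rightarrow> 'a)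
    \<Rightarrow> nat \<Rightarrow> nat \<Rightarrow> 's \<Rightarrow> real" where
  "Vk p Ss As k h = (if Hh p < h then (\<lambda>_. 0) else Vrem p Ss As k (Hh p + 1 - h))"

definition policies :: "(nat \<Rightarrow> 's::metric_space \<Rightarrow> 'a::metric_space) set" where
  "policies = {\<pi>. \<forall>h. \<pi> h \<in> borel_measurable borel}"

primrec vrem :: "('s::metric_space,'a::metric_space) kbvi_prm \<Rightarrow> (nat \<Rightarrow> 's \<times> 'a \<Rightarrow> 's measure)
    \<Rightarrow> (nat \<Rightarrow> 's \<Rightarrow> 'a) \<Rightarrow> nat \<Rightarrow> 's \<Rightarrow> real" where
  "vrem p P \<pi> 0 = (\<lambda>_. 0)"
| "vrem p P \<pi> (Suc d) = (\<lambda>s. rw p (Hh p - d) s (\<pi> (Hh p - d) s)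
      + (\<integral>s'. vrem p P \<pi> d s' \<partial>(P (Hh p - d) (s, \<pi> (Hh p - d) s))))"

definition vpi :: "('s::metric_space,'a::metric_space) kbvi_prm \<Rightarrow> (nat \<Rightarrow> 's \<times> 'a \<Rightarrow> 's measure)
    \<Rightarrow> (nat \<Rightarrow> 's \<Rightarrow> 'a) \<Rightarrow> nat \<Rightarrow> 's \<Rightarrow> real" where
  "vpi p P \<pi> h = (if Hh p < h then (\<lambda>_. 0) else vrem p P \<pi> (Hh p + 1 - h))"

definition Vstar :: "('s::metric_space,'a::metric_space) kbvi_prm \<Rightarrow> (nat \<Rightarrow> 's \<times> 'a \<Rightarrow> 's measure)
    \<Rightarrow> nat \<Rightarrow> 's \<Rightarrow> real" where
  "Vstar p P h s = (if Hh p < h then 0 else (SUP \<pi>\<in>policies. vpi p P \<pi> h s))"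

definition eventE :: "('s::metric_space,'a::metric_space) kbvi_prm \<Rightarrow> (nat \<Rightarrow> 's \<times> 'a \<Rightarrow> 's measure)
    \<Rightarrow> (nat \<Rightarrow> nat \<Rightarrow> 's) \<Rightarrow> (nat \<Rightarrow> nat \<Rightarrow> 'a) \<Rightarrow> bool" where
  "eventE p P Ss As \<longleftrightarrow>
     (\<forall>s a h k. 1 \<le> h \<and> h \<le> Hh p \<and> 1 \<le> k \<and> k \<le> Kk p \<longrightarrow>
        \<bar>Phat p Ss As k h (Vstar p P (Suc h)) (s, a)
          - (\<integral>s'. Vstar p P (Suc h) s' \<partial>(P h (s, a)))\<bar>
        \<le> 8 * sqrt (Vhat p Ss As k h (Vstar p P (Suc h)) (s, a) * eta1 p / Ccnt p Ss As k h (s, a))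
          + real (Hh p) * eta4 p / Ccnt p Ss As k h (s, a)
          + sig p * Ddel p)"

end

theory Submission
  imports Defs
begin

lemma lip_cont:
  fixes f :: "'x::metric_space \<Rightarrow> real"
  assumes "\<forall>x y. \<bar>f x - f y\<bar> \<le> L * dist x y"
  shows "continuous_on UNIV f"
proof -
  have "(max L 0)-lipschitz_on UNIV f"
  proof (rule lipschitz_onI)
    fix x y :: 'x
    have "dist (f x) (f y) \<le> L * dist x y" using assms by (simp add: dist_real_def)
    also have "\<dots> \<le> max L 0 * dist x y" by (intro mult_right_mono) auto
    finally show "dist (f x) (f y) \<le> max L 0 * dist x y" .
  qed auto
  then show ?thesis by (rule lipschitz_on_continuous_on)
qed

lemma cont_bounded:
  fixes f :: "'x::metric_space \<Rightarrow> real"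
  assumes "compact (UNIV::'x set)" "continuous_on UNIV f"
  shows "\<exists>B. \<forall>x. \<bar>f x\<bar> \<le> B"
proof -
  have "compact (range f)" using assms compact_continuous_image by blast
  then have "bounded (range f)" by (rule compact_imp_bounded)
  then show ?thesis unfolding bounded_real by auto
qed

lemma dist_bounded:
  assumes "compact (UNIV::'x::metric_space set)"
  shows "\<exists>D. \<forall>x y::'x. dist x y \<le> D"
proof -
  obtain c e where "\<forall>y\<in>(UNIV::'x set). dist c y \<le> e"
    using compact_imp_bounded[OF assms] unfolding bounded_def by auto
  then have "\<forall>x y::'x. dist x y \<le> 2*e"
  proof (intro allI)
    fix x y :: 'x
    have "dist x y \<le> dist x c + dist y c" by (rule dist_triangle2)
    moreover have "dist c x \<le> e" "dist c y \<le> e" using \<open>\<forall>y\<in>(UNIV::'x set). dist c y \<le> e\<close> by auto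
    ultimately show "dist x y \<le> 2*e" by (simp add: dist_commute)
  qed
  then show ?thesis by blast
qed

lemma compact_prod_UNIV:
  assumes "compact (UNIV::'x::metric_space set)" "compact (UNIV::'y::metric_space set)"
  shows "compact (UNIV::('x\<times>'y) set)"
  using compact_Times[OF assms] by simp

lemma rho_le: "rho x y \<le> 2 * dist x y"
  unfolding rho_def using dist_fst_le[of x y] dist_snd_le[of x y] by linarith

lemma rho_nonneg: "0 \<le> rho x y"
  unfolding rho_def by simp

lemma W1_lip:
  fixes f :: "'s::metric_space \<Rightarrow> real"
  assumes compS: "compact (UNIV::'s set)"
    and mu: "\<mu> \<in> space (prob_algebra (borel::'s measure))"
    and nu: "\<nu> \<in> space (prob_algebra (borel::'s measure))"
    and lipf: "\<forall>x y. \<bar>f x - f y\<bar> \<le> L * dist x y" and L: "0 \<le> L"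
    and W: "W1 \<mu> \<nu> \<le> ennreal c" and c: "0 \<le> c"
  shows "\<bar>(\<integral>x. f x \<partial>\<mu>) - (\<integral>x. f x \<partial>\<nu>)\<bar> \<le> L * c"
proof -
  have smu: "sets \<mu> = sets borel" and pmu: "prob_space \<mu>" using mu by (auto simp: space_prob_algebra)
  have snu: "sets \<nu> = sets borel" and pnu: "prob_space \<nu>" using nu by (auto simp: space_prob_algebra)
  have contf: "continuous_on UNIV f" using lip_cont[OF lipf] .
  have fm: "f \<in> borel_measurable borel" using contf by (rule borel_measurable_continuous_onI)
  obtain B where B: "\<forall>x. \<bar>f x\<bar> \<le> B" using cont_bounded[OF compS contf] by auto
  obtain D where D: "\<forall>x y::'s. dist x y \<le> D" using dist_bounded[OF compS] by auto
  show ?thesis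
  proof (cases "L = 0")
    case True
    then have fc: "\<And>x. f x = f undefined" using lipf by (metis abs_le_zero_iff eq_iff_diff_eq_0 mult_zero_left)
    have "(\<integral>x. f x \<partial>\<mu>) = f undefined"
      using prob_space.prob_space[OF pmu] by (subst fc) simp
    moreover have "(\<integral>x. f x \<partial>\<nu>) = f undefined"
      using prob_space.prob_space[OF pnu] by (subst fc) simp
    ultimately show ?thesis using True by simp
  next
    case False
    then have Lp: "0 < L" using L by simp
    let ?\<Delta> = "(\<integral>x. f x \<partial>\<mu>) - (\<integral>x. f x \<partial>\<nu>)"
    have "ennreal (\<bar>?\<Delta>\<bar> / L) \<le> W1 \<mu> \<nu>"
      unfolding W1_def
    proof (rule INF_greatest)
      fix \<gamma> assume "\<gamma> \<in> couplings \<mu> \<nu>"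
      then have sg: "sets \<gamma> = sets (borel :: ('s\<times>'s) measure)" and pg: "prob_space \<gamma>"
        and d1: "distr \<gamma> borel fst = \<mu>" and d2: "distr \<gamma> borel snd = \<nu>"
        unfolding couplings_def by auto
      interpret pg: prob_space \<gamma> by (rule pg)
      have mfst: "fst \<in> \<gamma> \<rightarrow>\<^sub>M (borel::'s measure)"
        using measurable_cong_sets[OF sg refl] borel_measurable_continuous_onI[OF continuous_on_fst[OF continuous_on_id]]
        by blast
      have msnd: "snd \<in> \<gamma> \<rightarrow>\<^sub>M (borel::'s measure)"
        using measurable_cong_sets[OF sg refl] borel_measurable_continuous_onI[OF continuous_on_snd[OF continuous_on_id]]
        by blast
      have mdist: "(\<lambda>z::'s\<times>'s. dist (fst z) (snd z)) \<in> borel_measurable \<gamma>"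
        using measurable_cong_sets[OF sg refl] borel_measurable_continuous_onI[OF continuous_on_dist[OF continuous_on_fst[OF continuous_on_id] continuous_on_snd[OF continuous_on_id]]]
        by blast
      have i1: "integrable \<gamma> (\<lambda>z. f (fst z))"
        by (rule pg.integrable_const_bound[where B=B]) (use B in \<open>auto intro: measurable_compose[OF mfst fm]\<close>)
      have i2: "integrable \<gamma> (\<lambda>z. f (snd z))"
        by (rule pg.integrable_const_bound[where B=B]) (use B in \<open>auto intro: measurable_compose[OF msnd fm]\<close>)
      have i3: "integrable \<gamma> (\<lambda>z. dist (fst z) (snd z))"
        by (rule pg.integrable_const_bound[where B=D]) (use D mdist in auto)
      have e1: "(\<integral>x. f x \<partial>\<mu>) = (\<integral>z. f (fst z) \<partial>\<gamma>)"
        using integral_distr[OF mfst fm] d1 by simp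
      have e2: "(\<integral>x. f x \<partial>\<nu>) = (\<integral>z. f (snd z) \<partial>\<gamma>)"
        using integral_distr[OF msnd fm] d2 by simp
      have eD: "?\<Delta> = (\<integral>z. f (fst z) - f (snd z) \<partial>\<gamma>)"
        using e1 e2 Bochner_Integration.integral_diff[OF i1 i2] by simp
      have iL: "integrable \<gamma> (\<lambda>z. L * dist (fst z) (snd z))" using i3 by simp
      have "(\<integral>z. f (fst z) - f (snd z) \<partial>\<gamma>) \<le> (\<integral>z. L * dist (fst z) (snd z) \<partial>\<gamma>)"
        by (rule integral_mono[OF Bochner_Integration.integrable_diff[OF i1 i2] iL])
           (use lipf in \<open>auto simp: abs_le_iff\<close>)
      moreover have "(\<integral>z. f (snd z) - f (fst z) \<partial>\<gamma>) \<le> (\<integral>z. L * dist (fst z) (snd z) \<partial>\<gamma>)"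
        by (rule integral_mono[OF Bochner_Integration.integrable_diff[OF i2 i1] iL])
           (use lipf in \<open>auto simp: abs_le_iff dist_commute\<close>)
      moreover have "(\<integral>z. f (snd z) - f (fst z) \<partial>\<gamma>) = - (\<integral>z. f (fst z) - f (snd z) \<partial>\<gamma>)"
        using Bochner_Integration.integral_diff[OF i1 i2] Bochner_Integration.integral_diff[OF i2 i1] by simp
      ultimately have "\<bar>?\<Delta>\<bar> \<le> L * (\<integral>z. dist (fst z) (snd z) \<partial>\<gamma>)"
        using eD by simp
      then have "\<bar>?\<Delta>\<bar> / L \<le> (\<integral>z. dist (fst z) (snd z) \<partial>\<gamma>)"
        using Lp by (simp add: divide_le_eq mult.commute)
      moreover have "(\<integral>\<^sup>+ z. ennreal (dist (fst z) (snd z)) \<partial>\<gamma>) = ennreal (\<integral>z. dist (fst z) (snd z) \<partial>\<gamma>)"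
        by (rule nn_integral_eq_integral[OF i3]) auto
      ultimately show "ennreal (\<bar>?\<Delta>\<bar> / L) \<le> (\<integral>\<^sup>+ z. ennreal (dist (fst z) (snd z)) \<partial>\<gamma>)"
        by (simp add: ennreal_leI)
    qed
    then have "ennreal (\<bar>?\<Delta>\<bar> / L) \<le> ennreal c" using W by (rule order_trans)
    then have "\<bar>?\<Delta>\<bar> / L \<le> c" using c by (simp add: ennreal_le_iff)
    then show ?thesis using Lp by (simp add: divide_le_eq mult.commute)
  qed
qed


primrec selL :: "('a \<Rightarrow> 's set) \<Rightarrow> 'a \<Rightarrow> 'a list \<Rightarrow> 's \<Rightarrow> 'a" where
  "selL Op a0 [] s = a0"
| "selL Op a0 (a # as) s = (if s \<in> Op a then a else selL Op a0 as s)"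

lemma selL_in: "s \<in> (\<Union>a\<in>set as. Op a) \<Longrightarrow> s \<in> Op (selL Op a0 as s)"
  by (induction as) auto

lemma selL_meas:
  fixes Op :: "'a::metric_space \<Rightarrow> 's::metric_space set"
  assumes "\<forall>a\<in>set as. open (Op a)"
  shows "selL Op a0 as \<in> borel_measurable borel \<and>
         (\<lambda>s. (s, selL Op a0 as s)) \<in> borel \<rightarrow>\<^sub>M (borel :: ('s \<times> 'a) measure)"
  using assms
proof (induction as)
  case Nil
  have "(\<lambda>s::'s. (s, a0)) \<in> borel \<rightarrow>\<^sub>M (borel :: ('s \<times> 'a) measure)"
    by (intro borel_measurable_continuous_onI continuous_intros)
  then show ?case by simp
next
  case (Cons a as)
  have oa: "Op a \<inter> space borel \<in> sets borel" using Cons.prems by auto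
  have c1: "(\<lambda>s::'s. (s, a)) \<in> borel \<rightarrow>\<^sub>M (borel :: ('s \<times> 'a) measure)"
    by (intro borel_measurable_continuous_onI continuous_intros)
  have "(\<lambda>s. if s \<in> Op a then a else selL Op a0 as s) \<in> borel_measurable borel"
    by (rule measurable_If_set[OF measurable_const _ oa]) (use Cons in auto)
  moreover have "(\<lambda>s. if s \<in> Op a then (s, a) else (s, selL Op a0 as s)) \<in> borel \<rightarrow>\<^sub>M (borel :: ('s \<times> 'a) measure)"
    by (rule measurable_If_set[OF c1 _ oa]) (use Cons in auto)
  moreover have "(\<lambda>s. if s \<in> Op a then (s, a) else (s, selL Op a0 as s)) = (\<lambda>s. (s, selL Op a0 (a#as) s))"
    by auto
  ultimately show ?case by simp
qed

lemma selector:
  fixes Q :: "'s::metric_space \<times> 'a::metric_space \<Rightarrow> real"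
  assumes compS: "compact (UNIV::'s set)"
    and contQ: "continuous_on UNIV Q"
    and contU: "continuous_on UNIV (\<lambda>s. SUP a. Q (s, a))"
    and bdd: "\<forall>s. bdd_above (range (\<lambda>a. Q (s, a)))"
    and eps: "0 < \<epsilon>"
  shows "\<exists>\<sigma>. \<sigma> \<in> borel_measurable borel \<and> (\<lambda>s. (s, \<sigma> s)) \<in> borel \<rightarrow>\<^sub>M (borel :: ('s \<times> 'a) measure)
             \<and> (\<forall>s. (SUP a. Q (s, a)) - \<epsilon> \<le> Q (s, \<sigma> s))"
proof -
  define Op where "Op a = {s. (SUP a. Q (s, a)) - \<epsilon> < Q (s, a)}" for a
  have opn: "open (Op a)" for a
    unfolding Op_def
  proof (rule open_Collect_less)
    show "continuous_on UNIV (\<lambda>s. (SUP a. Q (s, a)) - \<epsilon>)"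
      by (intro continuous_intros contU)
    show "continuous_on UNIV (\<lambda>s. Q (s, a))"
      by (rule continuous_on_compose2[OF contQ]) (auto intro!: continuous_intros)
  qed
  have cov: "UNIV \<subseteq> (\<Union>a\<in>UNIV. Op a)"
  proof
    fix s :: 's
    have "(SUP a. Q (s, a)) - \<epsilon> < (SUP a. Q (s, a))" using eps by simp
    then obtain a where "(SUP a. Q (s, a)) - \<epsilon> < Q (s, a)"
      using less_cSUP_iff[of UNIV "\<lambda>a. Q (s, a)"] bdd by auto
    then show "s \<in> (\<Union>a\<in>UNIV. Op a)" unfolding Op_def by auto
  qed
  obtain D where "finite D" and D: "UNIV \<subseteq> (\<Union>a\<in>D. Op a)"
    using compactE_image[OF compS, of UNIV Op] opn cov by metis
  then obtain as where as: "set as = D" using finite_list by blast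
  define \<sigma> where "\<sigma> = selL Op undefined as"
  have m: "\<sigma> \<in> borel_measurable borel \<and> (\<lambda>s. (s, \<sigma> s)) \<in> borel \<rightarrow>\<^sub>M (borel :: ('s \<times> 'a) measure)"
    unfolding \<sigma>_def by (rule selL_meas) (use opn in auto)
  have "\<forall>s. (SUP a. Q (s, a)) - \<epsilon> \<le> Q (s, \<sigma> s)"
  proof
    fix s
    have "s \<in> Op (\<sigma> s)" unfolding \<sigma>_def by (rule selL_in) (use D as in auto)
    then show "(SUP a. Q (s, a)) - \<epsilon> \<le> Q (s, \<sigma> s)" unfolding Op_def by auto
  qed
  with m show ?thesis by blast
qed

lemma minkowski_w:
  fixes w u v :: "nat \<Rightarrow> real"
  assumes "finite I" "\<forall>l\<in>I. 0 \<le> w l"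
  shows "sqrt (\<Sum>l\<in>I. w l * (u l + v l)\<^sup>2) \<le> sqrt (\<Sum>l\<in>I. w l * (u l)\<^sup>2) + sqrt (\<Sum>l\<in>I. w l * (v l)\<^sup>2)"
proof -
  have eq: "\<And>x. (\<Sum>l\<in>I. w l * (x l)\<^sup>2) = (\<Sum>l\<in>I. (sqrt (w l) * x l)\<^sup>2)"
    using assms by (intro sum.cong) (auto simp: power_mult_distrib)
  have "L2_set (\<lambda>l. sqrt (w l) * u l + sqrt (w l) * v l) I \<le> L2_set (\<lambda>l. sqrt (w l) * u l) I + L2_set (\<lambda>l. sqrt (w l) * v l) I"
    by (rule L2_set_triangle_ineq)
  then show ?thesis unfolding L2_set_def eq by (simp add: distrib_left)
qed

lemma var_key:
  fixes w a b :: "nat \<Rightarrow> real"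
  assumes fin: "finite I" and w0: "\<forall>l\<in>I. 0 \<le> w l" and w1: "(\<Sum>l\<in>I. w l) \<le> 1"
    and ab: "\<forall>l\<in>I. a l \<le> b l \<and> b l \<le> a l + H"
  shows "sqrt (\<Sum>l\<in>I. w l * (a l - (\<Sum>j\<in>I. w j * a j))\<^sup>2)
         \<le> sqrt (\<Sum>l\<in>I. w l * (b l - (\<Sum>j\<in>I. w j * b j))\<^sup>2)
           + sqrt (H * ((\<Sum>j\<in>I. w j * b j) - (\<Sum>j\<in>I. w j * a j)))"
proof -
  define ma where "ma = (\<Sum>j\<in>I. w j * a j)"
  define mb where "mb = (\<Sum>j\<in>I. w j * b j)"
  define md where "md = mb - ma"
  have mdeq: "md = (\<Sum>j\<in>I. w j * (b j - a j))"
    unfolding md_def ma_def mb_def by (simp add: sum_subtractf right_diff_distrib)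
  have "sqrt (\<Sum>l\<in>I. w l * (a l - ma)\<^sup>2)
        = sqrt (\<Sum>l\<in>I. w l * ((b l - mb) + (- ((b l - a l) - md)))\<^sup>2)"
    unfolding md_def by (intro arg_cong[where f=sqrt] sum.cong) (auto simp: algebra_simps)
  also have "\<dots> \<le> sqrt (\<Sum>l\<in>I. w l * (b l - mb)\<^sup>2) + sqrt (\<Sum>l\<in>I. w l * (- ((b l - a l) - md))\<^sup>2)"
    by (rule minkowski_w[OF fin w0])
  also have "(\<Sum>l\<in>I. w l * (- ((b l - a l) - md))\<^sup>2) \<le> H * md"
  proof -
    have "(\<Sum>l\<in>I. w l * (- ((b l - a l) - md))\<^sup>2)
       = (\<Sum>l\<in>I. w l * (b l - a l)\<^sup>2) - 2 * md * (\<Sum>l\<in>I. w l * (b l - a l)) + md\<^sup>2 * (\<Sum>l\<in>I. w l)"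
      by (simp add: power2_eq_square algebra_simps sum.distrib sum_subtractf sum_distrib_left sum_distrib_right)
    also have "\<dots> = (\<Sum>l\<in>I. w l * (b l - a l)\<^sup>2) - md\<^sup>2 * (2 - (\<Sum>l\<in>I. w l))"
      unfolding mdeq[symmetric] by (simp add: power2_eq_square algebra_simps)
    also have "\<dots> \<le> (\<Sum>l\<in>I. w l * (b l - a l)\<^sup>2)"
      using w1 by (simp add: mult_nonneg_nonneg)
    also have "\<dots> \<le> (\<Sum>l\<in>I. w l * (H * (b l - a l)))"
    proof (rule sum_mono)
      fix l assume l: "l \<in> I"
      have "(b l - a l)\<^sup>2 \<le> H * (b l - a l)"
        proof -
        have "0 \<le> b l - a l" "b l - a l \<le> H" using ab l by auto
        then show ?thesis unfolding power2_eq_square using mult_right_mono[of "b l - a l" H "b l - a l"] by simp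
      qed
      then show "w l * (b l - a l)\<^sup>2 \<le> w l * (H * (b l - a l))"
        using w0 l by (simp add: mult_left_mono)
    qed
    also have "\<dots> = H * md" unfolding mdeq by (simp add: sum_distrib_left algebra_simps)
    finally show ?thesis .
  qed
  then have "sqrt (\<Sum>l\<in>I. w l * (- ((b l - a l) - md))\<^sup>2) \<le> sqrt (H * md)" by simp
  finally show ?thesis unfolding ma_def mb_def md_def by simp
qed


primrec Urem :: "('s::metric_space,'a::metric_space) kbvi_prm \<Rightarrow> (nat \<Rightarrow> 's \<times> 'a \<Rightarrow> 's measure)
    \<Rightarrow> nat \<Rightarrow> 's \<Rightarrow> real" where
  "Urem p P 0 = (\<lambda>_. 0)"
| "Urem p P (Suc d) = (\<lambda>s. SUP a. rw p (Hh p - d) s a + (\<integral>s'. Urem p P d s' \<partial>(P (Hh p - d) (s, a))))"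

definition Uf :: "('s::metric_space,'a::metric_space) kbvi_prm \<Rightarrow> (nat \<Rightarrow> 's \<times> 'a \<Rightarrow> 's measure)
    \<Rightarrow> nat \<Rightarrow> 's \<Rightarrow> real" where
  "Uf p P h = (if Hh p < h then (\<lambda>_. 0) else Urem p P (Hh p + 1 - h))"

definition Qb :: "('s::metric_space,'a::metric_space) kbvi_prm \<Rightarrow> (nat \<Rightarrow> 's \<times> 'a \<Rightarrow> 's measure)
    \<Rightarrow> nat \<Rightarrow> 's \<times> 'a \<Rightarrow> real" where
  "Qb p P h x = rw p h (fst x) (snd x) + (\<integral>s'. Uf p P (Suc h) s' \<partial>(P h x))"

lemma Uf_step: "h \<le> Hh p \<Longrightarrow> Uf p P h = (\<lambda>s. SUP a. Qb p P h (s, a))"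
proof -
  assume h: "h \<le> Hh p"
  have e: "Hh p + 1 - h = Suc (Hh p - h)" using h by simp
  have e2: "Hh p - (Hh p - h) = h" using h by simp
  have e3: "Uf p P (Suc h) = Urem p P (Hh p - h)" unfolding Uf_def using h by simp
  have "Uf p P h = Urem p P (Suc (Hh p - h))" unfolding Uf_def using h e by simp
  then show ?thesis by (simp add: e2 e3[symmetric] Qb_def)
qed

lemma Uf_last: "Uf p P (Suc (Hh p)) = (\<lambda>_. 0)"
  unfolding Uf_def by simp

lemma vpi_step: "h \<le> Hh p \<Longrightarrow> vpi p P \<pi> h s = rw p h s (\<pi> h s) + (\<integral>s'. vpi p P \<pi> (Suc h) s' \<partial>(P h (s, \<pi> h s)))"
proof -
  assume h: "h \<le> Hh p"
  have e: "Hh p + 1 - h = Suc (Hh p - h)" using h by simp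
  have e2: "Hh p - (Hh p - h) = h" using h by simp
  have e3: "vpi p P \<pi> (Suc h) = vrem p P \<pi> (Hh p - h)" unfolding vpi_def using h by simp
  have "vpi p P \<pi> h = vrem p P \<pi> (Suc (Hh p - h))" unfolding vpi_def using h e by simp
  then show ?thesis by (simp add: e2 e3[symmetric])
qed

lemma vpi_last: "vpi p P \<pi> (Suc (Hh p)) = (\<lambda>_. 0)"
  unfolding vpi_def by simp

lemma Vk_step: "h \<le> Hh p \<Longrightarrow> Vk p Ss As k h = Vstep p Ss As k h (Vk p Ss As k (Suc h))"
proof -
  assume h: "h \<le> Hh p"
  have e: "Hh p + 1 - h = Suc (Hh p - h)" using h by simp
  have e2: "Hh p - (Hh p - h) = h" using h by simp
  have e3: "Vk p Ss As k (Suc h) = Vrem p Ss As k (Hh p - h)" unfolding Vk_def using h by simp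
  have "Vk p Ss As k h = Vrem p Ss As k (Suc (Hh p - h))" unfolding Vk_def using h e by simp
  then show ?thesis by (simp add: e2 e3[symmetric])
qed

lemma Vk_last: "Vk p Ss As k (Suc (Hh p)) = (\<lambda>_. 0)"
  unfolding Vk_def by simp

lemma Vk_le_H: "Vk p Ss As k h s \<le> real (Hh p)"
proof (cases "h \<le> Hh p")
  case True
  then show ?thesis by (simp add: Vk_step Vstep_def)
next
  case False
  then show ?thesis unfolding Vk_def by simp
qed

lemma vrem_cong: "(\<forall>d'<d. \<pi> (Hh p - d') = \<pi>' (Hh p - d')) \<Longrightarrow> vrem p P \<pi> d = vrem p P \<pi>' d"
  by (induction d) auto

lemma vpi_upd: "vpi p P (\<pi>(h := \<sigma>)) (Suc h) = vpi p P \<pi> (Suc h)"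
proof (cases "Hh p < Suc h")
  case True
  then show ?thesis unfolding vpi_def by simp
next
  case False
  then show ?thesis unfolding vpi_def
    by (simp, intro vrem_cong) auto
qed

lemma Lc_last: "Lc p (Suc (Hh p)) = 0"
  unfolding Lc_def by simp

lemma Lc_re: assumes "m \<le> Hh p" shows "Lc p m = lr p * (\<Sum>i\<le>Hh p - m. lp p ^ i)"
proof -
  have "(\<Sum>h'\<in>{m..Hh p}. lp p ^ (Hh p - h')) = (\<Sum>i\<le>Hh p - m. lp p ^ i)"
    by (rule sum.reindex_bij_witness[where i="\<lambda>i. Hh p - i" and j="\<lambda>h'. Hh p - h'"])
       (use assms in auto)
  then show ?thesis unfolding Lc_def by (simp add: sum_distrib_left[symmetric])
qed

lemma Lc_step: assumes "h \<le> Hh p" shows "Lc p h = lr p + lp p * Lc p (Suc h)"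
proof (cases "h = Hh p")
  case True
  then show ?thesis unfolding Lc_def by simp
next
  case False
  then have h: "Suc h \<le> Hh p" using assms by simp
  have "Lc p h = lr p * (\<Sum>i\<le>Hh p - h. lp p ^ i)" using Lc_re assms by blast
  also have "Hh p - h = Suc (Hh p - Suc h)" using h by simp
  also have "lr p * (\<Sum>i\<le>Suc (Hh p - Suc h). lp p ^ i) = lr p * (1 + lp p * (\<Sum>i\<le>Hh p - Suc h. lp p ^ i))"
    by (simp del: sum.atMost_Suc add: sum.atMost_Suc_shift sum_distrib_left)
  also have "\<dots> = lr p + lp p * Lc p (Suc h)"
    using Lc_re[OF h] by (simp add: algebra_simps)
  finally show ?thesis .
qed

lemma Lc_nonneg: "0 \<le> lr p \<Longrightarrow> 0 \<le> lp p \<Longrightarrow> 0 \<le> Lc p h"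
  unfolding Lc_def by (intro sum_nonneg) auto


locale kb =
  fixes p :: "('s::metric_space, 'a::metric_space) kbvi_prm"
    and P :: "nat \<Rightarrow> 's \<times> 'a \<Rightarrow> 's measure"
  assumes compS: "compact (UNIV :: 's set)"
    and compA: "compact (UNIV :: 'a set)"
    and kernel: "\<forall>h\<in>{1..Hh p}. P h \<in> borel \<rightarrow>\<^sub>M prob_algebra borel"
    and rw_nonneg: "\<forall>h\<in>{1..Hh p}. \<forall>s a. 0 \<le> rw p h s a"
    and rw_bound: "\<forall>\<pi>\<in>policies. \<forall>h\<in>{1..Hh p}. \<forall>s. vpi p P \<pi> h s \<le> real (Hh p)"
    and lr_pos: "0 < lr p" and lp_pos: "0 < lp p"
    and rw_lip: "\<forall>h\<in>{1..Hh p}. \<forall>s a s' a'.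
                   \<bar>rw p h s a - rw p h s' a'\<bar> \<le> lr p * rho (s, a) (s', a')"
    and P_lip: "\<forall>h\<in>{1..Hh p}. \<forall>s a s' a'.
                   W1 (P h (s, a)) (P h (s', a')) \<le> ennreal (lp p * rho (s, a) (s', a'))"
begin

lemma compSA: "compact (UNIV :: ('s \<times> 'a) set)"
  by (rule compact_prod_UNIV[OF compS compA])

lemma Pspace: "1 \<le> h \<Longrightarrow> h \<le> Hh p \<Longrightarrow> P h x \<in> space (prob_algebra borel)"
  using kernel measurable_space[of "P h" borel "prob_algebra borel" x] by auto

lemma Psets: "1 \<le> h \<Longrightarrow> h \<le> Hh p \<Longrightarrow> sets (P h x) = sets borel"
  using Pspace by (auto simp: space_prob_algebra)

lemma Pprob: "1 \<le> h \<Longrightarrow> h \<le> Hh p \<Longrightarrow> prob_space (P h x)"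
  using Pspace by (auto simp: space_prob_algebra)

lemma integrable_P:
  fixes f :: "'s \<Rightarrow> real"
  assumes "1 \<le> h" "h \<le> Hh p" "f \<in> borel_measurable borel" "\<forall>s. \<bar>f s\<bar> \<le> B"
  shows "integrable (P h x) f"
proof -
  interpret pr: prob_space "P h x" using Pprob assms by blast
  show ?thesis
    by (rule pr.integrable_const_bound[where B=B])
       (use assms Psets[OF assms(1,2)] in \<open>auto simp: measurable_cong_sets[OF Psets[OF assms(1,2)] refl]\<close>)
qed

lemma integral_P_const:
  fixes c :: real
  assumes "1 \<le> h" "h \<le> Hh p"
  shows "(\<integral>s. c \<partial>P h x) = c"
  using prob_space.prob_space[OF Pprob[OF assms], of x] by (simp add: lebesgue_integral_const)

lemma vrem_nonneg: "d \<le> Hh p \<Longrightarrow> 0 \<le> vrem p P \<pi> d s"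
proof (induction d arbitrary: s)
  case 0
  then show ?case by simp
next
  case (Suc d)
  have "0 \<le> rw p (Hh p - d) s (\<pi> (Hh p - d) s)" using rw_nonneg Suc.prems by auto
  moreover have "0 \<le> (\<integral>s'. vrem p P \<pi> d s' \<partial>(P (Hh p - d) (s, \<pi> (Hh p - d) s)))"
    by (rule integral_nonneg_AE) (use Suc in auto)
  ultimately show ?case by simp
qed

lemma vpi_nonneg: "1 \<le> h \<Longrightarrow> 0 \<le> vpi p P \<pi> h s"
  unfolding vpi_def by (auto intro!: vrem_nonneg)

lemma vpi_le: "\<pi> \<in> policies \<Longrightarrow> 1 \<le> h \<Longrightarrow> vpi p P \<pi> h s \<le> real (Hh p)"
  using rw_bound by (cases "h \<le> Hh p") (auto simp: vpi_def)

lemma vpi_abs: "\<pi> \<in> policies \<Longrightarrow> 1 \<le> h \<Longrightarrow> \<bar>vpi p P \<pi> h s\<bar> \<le> real (Hh p)"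
  using vpi_le vpi_nonneg by (simp add: abs_le_iff)

lemma rw_cont: "1 \<le> h \<Longrightarrow> h \<le> Hh p \<Longrightarrow> continuous_on UNIV (\<lambda>x::'s\<times>'a. rw p h (fst x) (snd x))"
proof -
  assume h: "1 \<le> h" "h \<le> Hh p"
  show ?thesis
  proof (rule lip_cont[where L="lr p * 2"], intro allI)
    fix x y :: "'s\<times>'a"
    have "\<bar>rw p h (fst x) (snd x) - rw p h (fst y) (snd y)\<bar> \<le> lr p * rho x y"
      using rw_lip h by (metis atLeastAtMost_iff prod.collapse)
    also have "\<dots> \<le> lr p * (2 * dist x y)" using rho_le[of x y] lr_pos by (intro mult_left_mono) auto
    finally show "\<bar>rw p h (fst x) (snd x) - rw p h (fst y) (snd y)\<bar> \<le> lr p * 2 * dist x y" by simp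
  qed
qed

definition Inv :: "nat \<Rightarrow> bool" where
  "Inv n \<longleftrightarrow> (\<forall>s s'. \<bar>Uf p P n s - Uf p P n s'\<bar> \<le> Lc p n * dist s s')
     \<and> (\<forall>s. 0 \<le> Uf p P n s)
     \<and> (\<forall>\<pi>\<in>policies. \<forall>s. vpi p P \<pi> n s \<le> Uf p P n s)
     \<and> (\<forall>\<epsilon>>0. \<exists>\<pi>\<in>policies. vpi p P \<pi> n \<in> borel_measurable borel \<and> (\<forall>s. Uf p P n s - \<epsilon> \<le> vpi p P \<pi> n s))"

lemma const_policy: "(\<lambda>_ _. undefined) \<in> policies"
  unfolding policies_def by auto

lemma Inv_last: "Inv (Suc (Hh p))"
  unfolding Inv_def Uf_last vpi_last Lc_last using const_policy by auto

end


context kb begin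

lemma Inv_step:
  assumes m1: "1 \<le> m" and mH: "m \<le> Hh p" and IH: "Inv (Suc m)"
  shows "Inv m"
proof -
  define W where "W = Uf p P (Suc m)"
  define Lw where "Lw = Lc p (Suc m)"
  have lipW: "\<forall>s s'. \<bar>W s - W s'\<bar> \<le> Lw * dist s s'" using IH unfolding Inv_def W_def Lw_def by blast
  have W0: "\<forall>s. 0 \<le> W s" using IH unfolding Inv_def W_def by blast
  have upW: "\<forall>\<pi>\<in>policies. \<forall>s. vpi p P \<pi> (Suc m) s \<le> W s" using IH unfolding Inv_def W_def by blast
  have lowW: "\<forall>\<epsilon>>0. \<exists>\<pi>\<in>policies. vpi p P \<pi> (Suc m) \<in> borel_measurable borel \<and> (\<forall>s. W s - \<epsilon> \<le> vpi p P \<pi> (Suc m) s)"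
    using IH unfolding Inv_def W_def by blast
  have Lw0: "0 \<le> Lw" unfolding Lw_def using lr_pos lp_pos by (intro Lc_nonneg) auto
  have Lm: "Lc p m = lr p + lp p * Lw" unfolding Lw_def using Lc_step[OF mH] .
  have Lm0: "0 \<le> Lc p m" using lr_pos lp_pos by (intro Lc_nonneg) auto
  have contW: "continuous_on UNIV W" using lip_cont lipW by blast
  have measW: "W \<in> borel_measurable borel" using contW by (rule borel_measurable_continuous_onI)
  obtain BW where BW: "\<forall>s. \<bar>W s\<bar> \<le> BW" using cont_bounded[OF compS contW] by auto
  have intW: "\<And>x. integrable (P m x) W" using integrable_P[OF m1 mH measW BW] .
  have Qbe: "\<And>x. Qb p P m x = rw p m (fst x) (snd x) + (\<integral>s'. W s' \<partial>P m x)"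
    unfolding Qb_def W_def by simp
  have QbLip: "\<bar>Qb p P m x - Qb p P m y\<bar> \<le> Lc p m * rho x y" for x y
  proof -
    obtain s a where x: "x = (s, a)" by (cases x)
    obtain s' a' where y: "y = (s', a')" by (cases y)
    have r: "\<bar>rw p m s a - rw p m s' a'\<bar> \<le> lr p * rho x y" using rw_lip m1 mH x y by auto
    have i: "\<bar>(\<integral>z. W z \<partial>P m x) - (\<integral>z. W z \<partial>P m y)\<bar> \<le> Lw * (lp p * rho x y)"
    proof (rule W1_lip[OF compS Pspace[OF m1 mH] Pspace[OF m1 mH] lipW Lw0])
      show "W1 (P m x) (P m y) \<le> ennreal (lp p * rho x y)" using P_lip m1 mH x y by auto
      show "0 \<le> lp p * rho x y" using lp_pos rho_nonneg[of x y] by simp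
    qed
    have "\<bar>Qb p P m x - Qb p P m y\<bar> \<le> lr p * rho x y + Lw * (lp p * rho x y)"
      using r i unfolding Qbe x y by simp
    also have "\<dots> = Lc p m * rho x y" unfolding Lm by (simp add: algebra_simps)
    finally show ?thesis .
  qed
  have contQ: "continuous_on UNIV (Qb p P m)"
  proof (rule lip_cont[where L="Lc p m * 2"], intro allI)
    fix x y :: "'s\<times>'a"
    have "\<bar>Qb p P m x - Qb p P m y\<bar> \<le> Lc p m * rho x y" by (rule QbLip)
    also have "\<dots> \<le> Lc p m * (2 * dist x y)" using rho_le[of x y] Lm0 by (intro mult_left_mono) auto
    finally show "\<bar>Qb p P m x - Qb p P m y\<bar> \<le> Lc p m * 2 * dist x y" by simp
  qed
  obtain BQ where BQ: "\<forall>x. \<bar>Qb p P m x\<bar> \<le> BQ" using cont_bounded[OF compSA contQ] by auto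
  have bddQ: "bdd_above (range (\<lambda>a. Qb p P m (s, a)))" for s
    using BQ by (intro bdd_aboveI[where M=BQ]) (auto simp: abs_le_iff)
  have Ustep: "Uf p P m = (\<lambda>s. SUP a. Qb p P m (s, a))" by (rule Uf_step[OF mH])
  have lipU: "\<forall>s s'. \<bar>Uf p P m s - Uf p P m s'\<bar> \<le> Lc p m * dist s s'"
  proof -
    have one: "Uf p P m s \<le> Uf p P m s' + Lc p m * dist s s'" for s s'
      unfolding Ustep
    proof (rule cSUP_least)
      fix a
      have "Qb p P m (s, a) \<le> Qb p P m (s', a) + Lc p m * rho (s, a) (s', a)"
        using QbLip[of "(s, a)" "(s', a)"] by (simp add: abs_le_iff)
      also have "rho (s, a) (s', a) = dist s s'" unfolding rho_def by simp
      also have "Qb p P m (s', a) \<le> (SUP a. Qb p P m (s', a))" by (rule cSUP_upper[OF _ bddQ]) auto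
      finally show "Qb p P m (s, a) \<le> (SUP a. Qb p P m (s', a)) + Lc p m * dist s s'" by simp
    qed simp
    show ?thesis
    proof (intro allI)
      fix s s'
      show "\<bar>Uf p P m s - Uf p P m s'\<bar> \<le> Lc p m * dist s s'"
        using one[of s s'] one[of s' s] by (simp add: abs_le_iff dist_commute)
    qed
  qed
  have Qb0: "0 \<le> Qb p P m x" for x
  proof -
    have "0 \<le> (\<integral>s'. W s' \<partial>P m x)" by (rule integral_nonneg_AE) (use W0 in auto)
    moreover have "0 \<le> rw p m (fst x) (snd x)" using rw_nonneg m1 mH by auto
    ultimately show ?thesis unfolding Qbe by simp
  qed
  have U0: "\<forall>s. 0 \<le> Uf p P m s"
  proof
    fix s
    have "Qb p P m (s, undefined) \<le> (SUP a. Qb p P m (s, a))" by (rule cSUP_upper[OF _ bddQ]) auto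
    then show "0 \<le> Uf p P m s" unfolding Ustep using Qb0[of "(s, undefined)"] by simp
  qed
  have upU: "\<forall>\<pi>\<in>policies. \<forall>s. vpi p P \<pi> m s \<le> Uf p P m s"
  proof (intro ballI allI)
    fix \<pi> :: "nat \<Rightarrow> 's \<Rightarrow> 'a" and s :: 's assume \<pi>: "\<pi> \<in> policies"
    have "(\<integral>z. vpi p P \<pi> (Suc m) z \<partial>P m (s, \<pi> m s)) \<le> (\<integral>z. W z \<partial>P m (s, \<pi> m s))"
      by (rule integral_mono'[OF intW]) (use upW \<pi> W0 in auto)
    then have "vpi p P \<pi> m s \<le> Qb p P m (s, \<pi> m s)"
      unfolding vpi_step[OF mH] Qbe by simp
    also have "\<dots> \<le> (SUP a. Qb p P m (s, a))" by (rule cSUP_upper[OF _ bddQ]) auto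
    finally show "vpi p P \<pi> m s \<le> Uf p P m s" unfolding Ustep .
  qed
  have lowU: "\<forall>\<epsilon>>0. \<exists>\<pi>\<in>policies. vpi p P \<pi> m \<in> borel_measurable borel \<and> (\<forall>s. Uf p P m s - \<epsilon> \<le> vpi p P \<pi> m s)"
  proof (intro allI impI)
    fix \<epsilon> :: real assume eps: "0 < \<epsilon>"
    obtain \<pi>' where \<pi>': "\<pi>' \<in> policies" and m': "vpi p P \<pi>' (Suc m) \<in> borel_measurable borel"
      and lo': "\<forall>s. W s - \<epsilon>/2 \<le> vpi p P \<pi>' (Suc m) s"
      using lowW eps by (metis half_gt_zero)
    have contU: "continuous_on UNIV (\<lambda>s. SUP a. Qb p P m (s, a))"
      using lip_cont[OF lipU] unfolding Ustep .
    obtain \<sigma> where \<sigma>m: "\<sigma> \<in> borel_measurable borel"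
      and \<sigma>p: "(\<lambda>s. (s, \<sigma> s)) \<in> borel \<rightarrow>\<^sub>M (borel :: ('s \<times> 'a) measure)"
      and \<sigma>q: "\<forall>s. (SUP a. Qb p P m (s, a)) - \<epsilon>/2 \<le> Qb p P m (s, \<sigma> s)"
      using selector[OF compS contQ contU, of "\<epsilon>/2"] bddQ eps by auto
    define \<pi> where "\<pi> = \<pi>'(m := \<sigma>)"
    have pol: "\<pi> \<in> policies" using \<pi>' \<sigma>m unfolding \<pi>_def policies_def by auto
    have vS: "vpi p P \<pi> (Suc m) = vpi p P \<pi>' (Suc m)" unfolding \<pi>_def by (rule vpi_upd)
    have vm: "vpi p P \<pi> m s = rw p m s (\<sigma> s) + (\<integral>z. vpi p P \<pi>' (Suc m) z \<partial>P m (s, \<sigma> s))" for s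
      unfolding vpi_step[OF mH] vS by (simp add: \<pi>_def)
    have intv: "integrable (P m x) (vpi p P \<pi>' (Suc m))" for x
      by (rule integrable_P[OF m1 mH m']) (use vpi_abs[OF \<pi>'] in auto)
    have intC: "integrable (P m x) (\<lambda>_. \<epsilon>/2)" for x
      by (rule integrable_P[OF m1 mH, where B="\<epsilon>/2"]) (use eps in auto)
    have intWc: "integrable (P m x) (\<lambda>z. W z - \<epsilon>/2)" for x
      by (rule Bochner_Integration.integrable_diff[OF intW intC])
    have low: "Uf p P m s - \<epsilon> \<le> vpi p P \<pi> m s" for s
    proof -
      have "(\<integral>z. W z - \<epsilon>/2 \<partial>P m (s, \<sigma> s)) \<le> (\<integral>z. vpi p P \<pi>' (Suc m) z \<partial>P m (s, \<sigma> s))"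
        by (rule integral_mono[OF intWc intv]) (use lo' in auto)
      moreover have "(\<integral>z. W z - \<epsilon>/2 \<partial>P m (s, \<sigma> s)) = (\<integral>z. W z \<partial>P m (s, \<sigma> s)) - \<epsilon>/2"
        using Bochner_Integration.integral_diff[OF intW intC, of "(s, \<sigma> s)"]
          integral_P_const[OF m1 mH, where c="\<epsilon>/2" and x="(s, \<sigma> s)"]
        by (simp add: prob_space.prob_space[OF Pprob[OF m1 mH]])
      ultimately have "Qb p P m (s, \<sigma> s) - \<epsilon>/2 \<le> vpi p P \<pi> m s"
        unfolding vm Qbe by simp
      then show ?thesis using \<sigma>q[rule_format, of s] unfolding Ustep by simp
    qed
    have meas: "vpi p P \<pi> m \<in> borel_measurable borel"
    proof -
      define g where "g x = rw p m (fst x) (snd x) + (\<integral>z. vpi p P \<pi>' (Suc m) z \<partial>P m x)" for x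
      have g1: "(\<lambda>x::'s\<times>'a. rw p m (fst x) (snd x)) \<in> borel_measurable borel"
        by (rule borel_measurable_continuous_onI[OF rw_cont[OF m1 mH]])
      have g2: "(\<lambda>x. \<integral>z. vpi p P \<pi>' (Suc m) z \<partial>P m x) \<in> borel_measurable (borel :: ('s\<times>'a) measure)"
        using measurable_compose[OF measurable_prob_algebraD[OF kernel[rule_format, of m]]
              integral_measurable_subprob_algebra[OF m']] m1 mH by auto
      have "g \<in> borel_measurable borel" unfolding g_def using g1 g2 by measurable
      then have "(\<lambda>s. g (s, \<sigma> s)) \<in> borel_measurable borel"
        by (rule measurable_compose[OF \<sigma>p])
      moreover have "vpi p P \<pi> m = (\<lambda>s. g (s, \<sigma> s))" by (rule ext) (simp add: vm g_def)
      ultimately show ?thesis by simp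
    qed
    show "\<exists>\<pi>\<in>policies. vpi p P \<pi> m \<in> borel_measurable borel \<and> (\<forall>s. Uf p P m s - \<epsilon> \<le> vpi p P \<pi> m s)"
      using pol meas low by blast
  qed
  show ?thesis unfolding Inv_def using lipU U0 upU lowU by blast
qed

end


lemma scalar_key:
  fixes C e1 e4 H X Vf VW Pf Af AW S :: real
  assumes C: "0 < C" and e1: "0 \<le> e1" and e4: "16 * e1 \<le> e4" and H: "0 \<le> H"
    and X: "0 \<le> X" and Vf: "0 \<le> Vf" and VW: "0 \<le> VW"
    and E: "Pf - Af \<le> 8 * sqrt (Vf * e1 / C) + H * e4 / C + S"
    and K: "sqrt Vf \<le> sqrt VW + sqrt (H * X)"
    and A: "AW = Af + X"
  shows "Pf \<le> AW + (9 * sqrt (VW * e4 / C) + 162 * H * e4 / C + S)"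
proof -
  define q where "q = sqrt (e1 / C)"
  have q0: "0 \<le> q" unfolding q_def using e1 C by simp
  have "sqrt (Vf * e1 / C) = sqrt Vf * q" unfolding q_def using real_sqrt_mult[of Vf "e1/C"] by simp
  also have "\<dots> \<le> (sqrt VW + sqrt (H * X)) * q" using K q0 by (rule mult_right_mono)
  finally have s1: "sqrt (Vf * e1 / C) \<le> sqrt VW * q + sqrt (H * X) * q" by (simp add: algebra_simps)
  have "sqrt VW * q = sqrt (VW * e1 / C)" unfolding q_def using real_sqrt_mult[of VW "e1/C"] by simp
  also have "\<dots> \<le> sqrt (VW * e4 / C)"
    using VW C e1 e4 by (intro real_sqrt_le_mono divide_right_mono mult_left_mono) auto
  finally have s2a: "sqrt VW * q \<le> sqrt (VW * e4 / C)" .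
  have "0 \<le> sqrt VW * q" using q0 VW by simp
  then have s2: "8 * (sqrt VW * q) \<le> 9 * sqrt (VW * e4 / C)" using s2a by linarith
  define t where "t = sqrt X"
  define r where "r = sqrt (H * e1 / C)"
  have "sqrt (H * X) * q = t * r" unfolding t_def r_def q_def
    by (simp add: real_sqrt_mult[symmetric] algebra_simps)
  moreover have "8 * (t * r) \<le> t\<^sup>2 + 16 * r\<^sup>2"
  proof -
    have "0 \<le> (t - 4*r)\<^sup>2" by simp
    moreover have "(t - 4*r)\<^sup>2 = t\<^sup>2 + 16 * r\<^sup>2 - 8 * (t * r)" by (simp add: power2_eq_square algebra_simps)
    ultimately show ?thesis by linarith
  qed
  moreover have "t\<^sup>2 = X" unfolding t_def using X by simp
  moreover have "r\<^sup>2 = H * e1 / C" unfolding r_def using H e1 C by simp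
  moreover have "16 * (H * e1 / C) \<le> H * e4 / C"
    using H C e4 by (simp add: divide_right_mono mult_left_mono) (metis divide_right_mono less_eq_real_def mult.left_commute mult_left_mono)
  ultimately have s3: "8 * (sqrt (H * X) * q) \<le> X + H * e4 / C" by linarith
  have "0 \<le> H * e4 / C" using H C e4 e1 by simp
  then show ?thesis using E s1 s2 s3 A by linarith
qed

context kb begin

lemma Inv_all: "1 \<le> n \<Longrightarrow> n \<le> Suc (Hh p) \<Longrightarrow> Inv n"
proof -
  assume n1: "1 \<le> n" and nH: "n \<le> Suc (Hh p)"
  from nH show "Inv n"
  proof (induction rule: inc_induct)
    case base
    then show ?case by (rule Inv_last)
  next
    case (step k)
    then show ?case using Inv_step n1 by simp
  qed
qed

lemma Vstar_le_H: "1 \<le> h \<Longrightarrow> Vstar p P h s \<le> real (Hh p)"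
  unfolding Vstar_def using const_policy vpi_le
  by (auto intro!: cSUP_least)

lemma Vstar_eq: assumes h1: "1 \<le> h" and hH: "h \<le> Suc (Hh p)" shows "Vstar p P h = Uf p P h"
proof (cases "h = Suc (Hh p)")
  case True
  then show ?thesis unfolding Vstar_def Uf_def by auto
next
  case False
  then have hH': "h \<le> Hh p" using hH by simp
  have I: "Inv h" using Inv_all h1 hH by simp
  show ?thesis
  proof
    fix s
    have ne: "policies \<noteq> {}" using const_policy by auto
    have bdd: "bdd_above ((\<lambda>\<pi>. vpi p P \<pi> h s) ` policies)"
      using vpi_le h1 by (intro bdd_aboveI[where M="real (Hh p)"]) auto
    have le: "(SUP \<pi>\<in>policies. vpi p P \<pi> h s) \<le> Uf p P h s"
      using I ne unfolding Inv_def by (intro cSUP_least) auto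
    have ge: "Uf p P h s \<le> (SUP \<pi>\<in>policies. vpi p P \<pi> h s)"
    proof (rule field_le_epsilon)
      fix e :: real assume e: "0 < e"
      obtain \<pi> where \<pi>: "\<pi> \<in> policies" and lo: "Uf p P h s - e \<le> vpi p P \<pi> h s"
        using I e unfolding Inv_def by blast
      have "vpi p P \<pi> h s \<le> (SUP \<pi>\<in>policies. vpi p P \<pi> h s)" by (rule cSUP_upper[OF \<pi> bdd])
      then show "Uf p P h s \<le> (SUP \<pi>\<in>policies. vpi p P \<pi> h s) + e" using lo by simp
    qed
    show "Vstar p P h s = Uf p P h s" unfolding Vstar_def using hH' le ge by simp
  qed
qed

lemma Qb_lip:
  assumes m1: "1 \<le> m" and mH: "m \<le> Hh p"
  shows "\<bar>Qb p P m x - Qb p P m y\<bar> \<le> Lc p m * rho x y"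
proof -
  have IH: "Inv (Suc m)" using Inv_all mH by simp
  define W where "W = Uf p P (Suc m)"
  define Lw where "Lw = Lc p (Suc m)"
  have lipW: "\<forall>s s'. \<bar>W s - W s'\<bar> \<le> Lw * dist s s'" using IH unfolding Inv_def W_def Lw_def by blast
  have Lw0: "0 \<le> Lw" unfolding Lw_def using lr_pos lp_pos by (intro Lc_nonneg) auto
  have Lm: "Lc p m = lr p + lp p * Lw" unfolding Lw_def using Lc_step[OF mH] .
  have Qbe: "\<And>x. Qb p P m x = rw p m (fst x) (snd x) + (\<integral>s'. W s' \<partial>P m x)"
    unfolding Qb_def W_def by simp
  obtain s a where x: "x = (s, a)" by (cases x)
  obtain s' a' where y: "y = (s', a')" by (cases y)
  have r: "\<bar>rw p m s a - rw p m s' a'\<bar> \<le> lr p * rho x y" using rw_lip m1 mH x y by auto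
  have i: "\<bar>(\<integral>z. W z \<partial>P m x) - (\<integral>z. W z \<partial>P m y)\<bar> \<le> Lw * (lp p * rho x y)"
  proof (rule W1_lip[OF compS Pspace[OF m1 mH] Pspace[OF m1 mH] lipW Lw0])
    show "W1 (P m x) (P m y) \<le> ennreal (lp p * rho x y)" using P_lip m1 mH x y by auto
    show "0 \<le> lp p * rho x y" using lp_pos rho_nonneg[of x y] by simp
  qed
  have "\<bar>Qb p P m x - Qb p P m y\<bar> \<le> lr p * rho x y + Lw * (lp p * rho x y)"
    using r i unfolding Qbe x y by simp
  also have "\<dots> = Lc p m * rho x y" unfolding Lm by (simp add: algebra_simps)
  finally show ?thesis .
qed

lemma Uf_nonneg: "1 \<le> h \<Longrightarrow> h \<le> Suc (Hh p) \<Longrightarrow> 0 \<le> Uf p P h s"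
  using Inv_all unfolding Inv_def by blast

end


context kb begin

lemma Qtil_ge:
  fixes Ss :: "nat \<Rightarrow> nat \<Rightarrow> 's" and As :: "nat \<Rightarrow> nat \<Rightarrow> 'a" and Wk :: "'s \<Rightarrow> real"
  assumes k1: "1 \<le> k" and kK: "k \<le> Kk p" and m1: "1 \<le> m" and mH: "m \<le> Hh p"
    and E: "eventE p P Ss As"
    and g0: "\<forall>z\<ge>0. 0 \<le> gk p z" and sig: "0 < sig p" and bet: "0 < bet p"
    and e1: "0 \<le> eta1 p" and e4: "16 * eta1 p \<le> eta4 p"
    and Wlo: "\<forall>s. Uf p P (Suc m) s \<le> Wk s" and Whi: "\<forall>s. Wk s \<le> real (Hh p)"
  shows "Qb p P m z \<le> Qtil p Ss As k m Wk z"
proof -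
  obtain s a where z: "z = (s, a)" by (cases z)
  define f where "f = Uf p P (Suc m)"
  have Vs: "Vstar p P (Suc m) = f" unfolding f_def using mH by (intro Vstar_eq) auto
  have f0: "\<forall>s. 0 \<le> f s" unfolding f_def using mH by (auto intro: Uf_nonneg)
  define C where "C = Ccnt p Ss As k m z"
  define w where "w l = wgt p Ss As m l z / C" for l
  have wg0: "0 \<le> wgt p Ss As m l z" for l
  proof -
    have "0 \<le> rho z (Ss l m, As l m) / sig p" using rho_nonneg[of z "(Ss l m, As l m)"] sig by simp
    then show ?thesis unfolding wgt_def using g0 by auto
  qed
  have Ceq: "C = bet p + (\<Sum>l\<in>{1..<k}. wgt p Ss As m l z)" unfolding C_def Ccnt_def by simp
  have sw0: "0 \<le> (\<Sum>l\<in>{1..<k}. wgt p Ss As m l z)" using wg0 by (intro sum_nonneg) auto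
  have C0: "0 < C" using Ceq bet sw0 by linarith
  have w0: "\<forall>l\<in>{1..<k}. 0 \<le> w l" unfolding w_def using wg0 C0 by auto
  have w1: "(\<Sum>l\<in>{1..<k}. w l) \<le> 1"
  proof -
    have "(\<Sum>l\<in>{1..<k}. w l) = (\<Sum>l\<in>{1..<k}. wgt p Ss As m l z) / C"
      unfolding w_def by (simp add: sum_divide_distrib)
    also have "\<dots> \<le> 1" using C0 Ceq bet by (simp add: divide_le_eq)
    finally show ?thesis .
  qed
  define a' where "a' l = f (Ss l (Suc m))" for l
  define b' where "b' l = Wk (Ss l (Suc m))" for l
  have Ph: "\<And>g. Phat p Ss As k m g z = (\<Sum>l\<in>{1..<k}. w l * g (Ss l (Suc m)))"
    unfolding Phat_def w_def C_def by simp
  have Vh: "\<And>g. Vhat p Ss As k m g z = (\<Sum>l\<in>{1..<k}. w l * (g (Ss l (Suc m)) - (\<Sum>j\<in>{1..<k}. w j * g (Ss j (Suc m))))\<^sup>2)"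
    unfolding Vhat_def Ph[symmetric] unfolding w_def C_def by simp
  have ab: "\<forall>l\<in>{1..<k}. a' l \<le> b' l \<and> b' l \<le> a' l + real (Hh p)"
  proof
    fix l
    have "0 \<le> a' l" "b' l \<le> real (Hh p)" "a' l \<le> b' l"
      unfolding a'_def b'_def using f0 Whi Wlo unfolding f_def by auto
    then show "a' l \<le> b' l \<and> b' l \<le> a' l + real (Hh p)" by linarith
  qed
  have key: "sqrt (Vhat p Ss As k m f z) \<le> sqrt (Vhat p Ss As k m Wk z)
      + sqrt (real (Hh p) * (Phat p Ss As k m Wk z - Phat p Ss As k m f z))"
    using var_key[OF _ w0 w1 ab] unfolding Vh Ph a'_def b'_def by simp
  have X0: "0 \<le> Phat p Ss As k m Wk z - Phat p Ss As k m f z"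
  proof -
    have "Phat p Ss As k m f z \<le> Phat p Ss As k m Wk z"
      unfolding Ph using w0 Wlo[unfolded f_def[symmetric]]
      by (intro sum_mono mult_left_mono) auto
    then show ?thesis by simp
  qed
  have Vf0: "0 \<le> Vhat p Ss As k m f z" unfolding Vh using w0 by (intro sum_nonneg) auto
  have VW0: "0 \<le> Vhat p Ss As k m Wk z" unfolding Vh using w0 by (intro sum_nonneg) auto
  have Ev: "\<bar>Phat p Ss As k m f z - (\<integral>s'. f s' \<partial>(P m z))\<bar>
        \<le> 8 * sqrt (Vhat p Ss As k m f z * eta1 p / C) + real (Hh p) * eta4 p / C + sig p * Ddel p"
  proof -
    have "\<bar>Phat p Ss As k m (Vstar p P (Suc m)) (s, a) - (\<integral>s'. Vstar p P (Suc m) s' \<partial>(P m (s, a)))\<bar>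
        \<le> 8 * sqrt (Vhat p Ss As k m (Vstar p P (Suc m)) (s, a) * eta1 p / Ccnt p Ss As k m (s, a))
          + real (Hh p) * eta4 p / Ccnt p Ss As k m (s, a) + sig p * Ddel p"
      using E k1 kK m1 mH unfolding eventE_def by blast
    then show ?thesis unfolding Vs C_def z .
  qed
  have "(\<integral>s'. f s' \<partial>(P m z)) \<le> Phat p Ss As k m Wk z
     + (9 * sqrt (Vhat p Ss As k m Wk z * eta4 p / C) + 162 * real (Hh p) * eta4 p / C + sig p * Ddel p)"
    by (rule scalar_key[OF C0 e1 e4 _ X0 Vf0 VW0 _ key]) (use Ev in auto)
  then show ?thesis
    unfolding Qb_def Qtil_def bonus_def C_def f_def by simp
qed

end

theorem lemma5:
  fixes p :: "('s::metric_space, 'a::metric_space) kbvi_prm"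
    and P :: "nat \<Rightarrow> 's \<times> 'a \<Rightarrow> 's measure"
    and Ss :: "nat \<Rightarrow> nat \<Rightarrow> 's" and As :: "nat \<Rightarrow> nat \<Rightarrow> 'a"
    and g' :: "real \<Rightarrow> real"
  assumes compS: "compact (UNIV :: 's set)"
    and compA: "compact (UNIV :: 'a set)"
    and kernel: "\<forall>h\<in>{1..Hh p}. P h \<in> borel \<rightarrow>\<^sub>M prob_algebra borel"
    and rw_nonneg: "\<forall>h\<in>{1..Hh p}. \<forall>s a. 0 \<le> rw p h s a"
    and rw_bound: "\<forall>\<pi>\<in>policies. \<forall>h\<in>{1..Hh p}. \<forall>s. vpi p P \<pi> h s \<le> real (Hh p)"
    and lr_pos: "0 < lr p" and lp_pos: "0 < lp p" and lp_lt1: "lp p < 1"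
    and rw_lip: "\<forall>h\<in>{1..Hh p}. \<forall>s a s' a'.
                   \<bar>rw p h s a - rw p h s' a'\<bar> \<le> lr p * rho (s, a) (s', a')"
    and P_lip: "\<forall>h\<in>{1..Hh p}. \<forall>s a s' a'.
                   W1 (P h (s, a)) (P h (s', a')) \<le> ennreal (lp p * rho (s, a) (s', a'))"
    and g_range: "\<forall>z\<ge>0. 0 \<le> gk p z \<and> gk p z \<le> 1"
    and g_deriv: "\<forall>z\<ge>0. (gk p has_real_derivative g' z) (at z within {0..})"
    and g_mono: "\<forall>x y. 0 \<le> x \<and> x \<le> y \<longrightarrow> gk p y \<le> gk p x"
    and g_4: "gk p 4 > 0"
    and g_tail: "\<forall>z\<ge>0. gk p z \<le> cC1 p * exp (- z\<^sup>2 / 2)"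
    and g'_bound: "\<forall>z\<ge>0. \<bar>g' z\<bar> \<le> cC2 p"
    and sig_pos: "0 < sig p"
    and bet_pos: "0 < bet p" and bet_le1: "bet p \<le> 1"
    and del_pos: "0 < del p" and del_lt1: "del p < 1"
    and greedy: "\<forall>k\<in>{1..Kk p}. \<forall>h\<in>{1..Hh p}. \<forall>a.
                   Qk p Ss As k h (Vk p Ss As k (Suc h)) (Ss k h, a)
                   \<le> Qk p Ss As k h (Vk p Ss As k (Suc h)) (Ss k h, As k h)"
    and E: "eventE p P Ss As"
  shows "\<forall>s. \<forall>h\<in>{1..Hh p + 1}. \<forall>k\<in>{1..Kk p}. Vstar p P h s \<le> Vk p Ss As k h s"
proof -
  interpret kb p P
    by (unfold_locales) (use compS compA kernel rw_nonneg rw_bound lr_pos lp_pos rw_lip P_lip in auto)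
  have eta0: "0 < eta p"
    unfolding eta_def using del_pos del_lt1 by (intro ln_gt_zero) (simp add: field_simps)
  have C10: "0 < cC1 p"
  proof (rule ccontr)
    assume "\<not> 0 < cC1 p"
    then have "cC1 p * exp (- 4\<^sup>2 / 2) \<le> 0" by (simp add: mult_nonpos_nonneg)
    then show False using g_tail g_4 by (metis order.trans linorder_not_le zero_le_numeral)
  qed
  have e1: "0 \<le> eta1 p" unfolding eta1_def using C10 eta0 by simp
  have e2: "0 \<le> eta2 p" unfolding eta2_def using eta0 bet_pos by simp
  have e4: "16 * eta1 p \<le> eta4 p" unfolding eta4_def using e2 by simp
  have g0: "\<forall>z\<ge>0. 0 \<le> gk p z" using g_range by auto
  obtain DS where DS: "\<forall>x y::'s. dist x y \<le> DS" using dist_bounded[OF compS] by auto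
  obtain DA where DA: "\<forall>x y::'a. dist x y \<le> DA" using dist_bounded[OF compA] by auto
  show ?thesis
  proof (intro allI ballI)
    fix s :: 's and h k assume h: "h \<in> {1..Hh p + 1}" and k: "k \<in> {1..Kk p}"
    have main: "\<forall>s. Uf p P h s \<le> Vk p Ss As k h s"
    proof -
      have "h \<le> Suc (Hh p)" using h by simp
      then show ?thesis
      proof (induction rule: inc_induct)
        case base
        then show ?case by (simp add: Uf_last Vk_last)
      next
        case (step m)
        have m1: "1 \<le> m" using step h by simp
        have mH: "m \<le> Hh p" using step by simp
        define Wk where "Wk = Vk p Ss As k (Suc m)"
        have Wlo: "\<forall>s. Uf p P (Suc m) s \<le> Wk s" using step unfolding Wk_def by simp
        have Whi: "\<forall>s. Wk s \<le> real (Hh p)" unfolding Wk_def by (simp add: Vk_le_H)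
        show ?case
        proof
          fix s
          have UH: "Uf p P m s \<le> real (Hh p)"
            using Vstar_eq[OF m1] Vstar_le_H[OF m1] mH by (metis le_SucI)
          have US: "Uf p P m s \<le> (SUP a. Qk p Ss As k m Wk (s, a))"
          proof (cases "k \<le> 1")
            case True
            then show ?thesis unfolding Qk_def using UH by simp
          next
            case False
            then have k2: "2 \<le> k" by simp
            have fin: "finite {1..<k}" and ne: "{1..<k} \<noteq> {}" using k2 by auto
            have Qkeq: "Qk p Ss As k m Wk (s, a) = Min ((\<lambda>l. Qtil p Ss As k m Wk (Ss l m, As l m) + Lc p m * rho (s, a) (Ss l m, As l m)) ` {1..<k})" for a
              unfolding Qk_def using False by simp
            have ge: "Qb p P m (s, a) \<le> Qk p Ss As k m Wk (s, a)" for a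
              unfolding Qkeq
            proof (rule Min.boundedI)
              show "finite ((\<lambda>l. Qtil p Ss As k m Wk (Ss l m, As l m) + Lc p m * rho (s, a) (Ss l m, As l m)) ` {1..<k})"
                using fin by simp
              show "(\<lambda>l. Qtil p Ss As k m Wk (Ss l m, As l m) + Lc p m * rho (s, a) (Ss l m, As l m)) ` {1..<k} \<noteq> {}"
                using ne by simp
            next
              fix y assume "y \<in> (\<lambda>l. Qtil p Ss As k m Wk (Ss l m, As l m) + Lc p m * rho (s, a) (Ss l m, As l m)) ` {1..<k}"
              then obtain l where y: "y = Qtil p Ss As k m Wk (Ss l m, As l m) + Lc p m * rho (s, a) (Ss l m, As l m)" by auto
              have "Qb p P m (s, a) \<le> Qb p P m (Ss l m, As l m) + Lc p m * rho (s, a) (Ss l m, As l m)"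
                using Qb_lip[OF m1 mH, of "(s, a)" "(Ss l m, As l m)"] by (simp add: abs_le_iff)
              also have "Qb p P m (Ss l m, As l m) \<le> Qtil p Ss As k m Wk (Ss l m, As l m)"
                by (rule Qtil_ge[OF _ _ m1 mH E g0 sig_pos bet_pos e1 e4 Wlo Whi]) (use k in auto)
              finally show "Qb p P m (s, a) \<le> y" using y by simp
            qed
            have Lm0: "0 \<le> Lc p m" using lr_pos lp_pos by (intro Lc_nonneg) auto
            have bdd: "bdd_above (range (\<lambda>a. Qk p Ss As k m Wk (s, a)))"
            proof (rule bdd_aboveI[where M="Qtil p Ss As k m Wk (Ss 1 m, As 1 m) + Lc p m * (DS + DA)"])
              fix y assume "y \<in> range (\<lambda>a. Qk p Ss As k m Wk (s, a))"
              then obtain a where y: "y = Qk p Ss As k m Wk (s, a)" by auto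
              have "y \<le> Qtil p Ss As k m Wk (Ss 1 m, As 1 m) + Lc p m * rho (s, a) (Ss 1 m, As 1 m)"
                unfolding y Qkeq using fin k2 by (intro Min_le) auto
              moreover have "rho (s, a) (Ss 1 m, As 1 m) \<le> DS + DA"
                unfolding rho_def using DS DA by (simp add: add_mono)
              then have "Lc p m * rho (s, a) (Ss 1 m, As 1 m) \<le> Lc p m * (DS + DA)"
                using Lm0 by (rule mult_left_mono)
              ultimately show "y \<le> Qtil p Ss As k m Wk (Ss 1 m, As 1 m) + Lc p m * (DS + DA)"
                by linarith
            qed
            show ?thesis unfolding Uf_step[OF mH]
              by (rule cSUP_mono[OF _ bdd]) (use ge in auto)
          qed
          show "Uf p P m s \<le> Vk p Ss As k m s"
            unfolding Vk_step[OF mH] Vstep_def Wk_def[symmetric] using UH US by simp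
        qed
      qed
    qed
    have "Vstar p P h s = Uf p P h s" using Vstar_eq h by auto
    then show "Vstar p P h s \<le> Vk p Ss As k h s" using main by simp
  qed
qed

end
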